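(* Let $E^I_m(q;x,y)=\sum_{T\in\mathcal{T}^I_m}x^{l(T)}y^{u(T)}q^{\operatorname{inv}(T)}$ for $m\ge1$ and set $E^I_0(q;x,y)=x$. Then for all $n\ge1$, \[ E^I_{n+1}(q;x,y)=y\,E^I_n(q;x,y)+\sum_{k=0}^{n-2}q^{\,n-k-1}{n-1\brack k}_q\,E^I_{k+1}(q;x,y)\,E^I_{n-k-1}(q;x,y). \]
   Context: An increasing binary tree on $[m]=\{1,\dots,m\}$ is a rooted tree on $[m]$ with labels increasing along paths from the root, each vertex having at most one (distinguished) left child and at most one right child. $\mathcal{T}^I_m$ is the set of André I trees on $[m]$: increasing binary trees in which, for every vertex with at least one child, the maximum label of the left subtree is less than the maximum label of the right subtree (maximum of the empty tree $=0$). $l(T)$ is the number of leaves, $u(T)$ the number of vertices with exactly one child. An inversion of $T$ is a pair $(i,j)$ of vertices with $i>j$ such that either (1) $j$ belongs to the right subtree of some vertex $v$ on the path from the root to $i$ whose left child is on that path; or (2) $j$ is on the path from the root to $i$ and the left child of $j$ is on that path; $\operatorname{inv}(T)$ counts inversions. ${n\brack k}_q=\frac{(q;q)_n}{(q;q)_k(q;q)_{n-k}}$ for $0\le k\le n$, with $(q;q)_n=\prod_{i=1}^n(1-q^i)$. *)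

theory Defs
  imports Main "HOL-Library.Tree" "HOL-Computational_Algebra.Formal_Power_Series"
begin

fun increasing :: "nat tree \<Rightarrow> bool" where
  "increasing Leaf = True"
| "increasing (Node l v r) =
     ((\<forall>x \<in> set_tree l \<union> set_tree r. v < x) \<and> increasing l \<and> increasing r)"

definition maxlab :: "nat tree \<Rightarrow> nat" where
  "maxlab t = (if t = Leaf then 0 else Max (set_tree t))"

fun andre_cond :: "nat tree \<Rightarrow> bool" where
  "andre_cond Leaf = True"
| "andre_cond (Node l v r) =
     (((l \<noteq> Leaf \<or> r \<noteq> Leaf) \<longrightarrow> maxlab l < maxlab r) \<and> andre_cond l \<and> andre_cond r)"

definition inc_trees :: "nat \<Rightarrow> nat tree set" where
  "inc_trees m = {T. set_tree T = {1..m} \<and> distinct (inorder T) \<and> increasing T}"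

definition andreI_trees :: "nat \<Rightarrow> nat tree set" where
  "andreI_trees m = {T \<in> inc_trees m. andre_cond T}"

fun nleaves :: "nat tree \<Rightarrow> nat" where
  "nleaves Leaf = 0"
| "nleaves (Node l v r) = (if l = Leaf \<and> r = Leaf then 1 else nleaves l + nleaves r)"

fun nunary :: "nat tree \<Rightarrow> nat" where
  "nunary Leaf = 0"
| "nunary (Node l v r) = (if (l = Leaf) \<noteq> (r = Leaf) then 1 else 0) + nunary l + nunary r"

text \<open>At a vertex v whose left child lies on the path to i
  (i.e. i in the left subtree of v): condition (1) gives j in the right subtree of v,
  condition (2) gives j = v.  If i lies in the right subtree, v contributes nothing.\<close>
fun inv_pairs :: "nat tree \<Rightarrow> (nat \<times> nat) set" where
  "inv_pairs Leaf = {}"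
| "inv_pairs (Node l v r) =
     inv_pairs l \<union> inv_pairs r \<union>
     {(i, j). i \<in> set_tree l \<and> (j \<in> set_tree r \<or> j = v) \<and> i > j}"

definition inv :: "nat tree \<Rightarrow> nat" where
  "inv T = card (inv_pairs T)"

definition qpoch :: "'a::comm_ring_1 \<Rightarrow> nat \<Rightarrow> 'a" where
  "qpoch q n = (\<Prod>i = 1..n. 1 - q ^ i)"

definition qbinom :: "'a::idom_divide \<Rightarrow> nat \<Rightarrow> nat \<Rightarrow> 'a" where
  "qbinom q n k = qpoch q n div (qpoch q k * qpoch q (n - k))"

definition EI :: "nat \<Rightarrow> 'a::comm_semiring_1 \<Rightarrow> 'a \<Rightarrow> 'a \<Rightarrow> 'a" where
  "EI m q x y = (if m = 0 then x
     else (\<Sum>T \<in> andreI_trees m. x ^ nleaves T * y ^ nunary T * q ^ inv T))"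

end

theory Submission
  imports Defs
begin


fun Gq :: "'a::comm_semiring_1 \<Rightarrow> nat \<Rightarrow> nat \<Rightarrow> 'a" where
  "Gq q n 0 = 1"
| "Gq q 0 (Suc k) = 0"
| "Gq q (Suc n) (Suc k) = Gq q n k + q ^ Suc k * Gq q n (Suc k)"

lemma Gq_zero: "n < k \<Longrightarrow> Gq q n k = 0"
proof (induction n arbitrary: k)
  case 0 then show ?case by (cases k) auto
next
  case (Suc n) then show ?case by (cases k) auto
qed

lemma qpoch_Suc: "qpoch q (Suc n) = qpoch q n * (1 - q ^ Suc n)"
  unfolding qpoch_def by (simp add: prod.cl_ivl_Suc mult.commute)

lemma qpoch_0: "qpoch q 0 = 1"
  unfolding qpoch_def by simp

lemma Gq_qpoch: "k \<le> n \<Longrightarrow> Gq q n k * (qpoch q k * qpoch q (n - k)) = (qpoch q n :: 'a::comm_ring_1)"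
proof (induction n arbitrary: k)
  case 0 then show ?case by (simp add: qpoch_0)
next
  case (Suc n)
  show ?case
  proof (cases k)
    case 0 then show ?thesis by (simp add: qpoch_0)
  next
    case (Suc k')
    with Suc.prems have kn: "k' \<le> n" by simp
    have t1: "Gq q n k' * (qpoch q k' * qpoch q (n - k')) = qpoch q n" using Suc.IH kn by blast
    show ?thesis
    proof (cases "k' = n")
      case True
      have "Gq q (Suc n) k * (qpoch q k * qpoch q (Suc n - k))
          = (Gq q n k' * (qpoch q k' * qpoch q (n - k'))) * (1 - q ^ Suc n)"
        using True Suc by (simp add: qpoch_Suc Gq_zero qpoch_0 algebra_simps)
      then show ?thesis by (simp only: t1 qpoch_Suc)
    next
      case False
      then have kn': "Suc k' \<le> n" using kn by simp
      have t2: "Gq q n (Suc k') * (qpoch q (Suc k') * qpoch q (n - Suc k')) = qpoch q n"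
        using Suc.IH kn' by blast
      have nk: "n - k' = Suc (n - Suc k')" using kn' by simp
      have pw: "q ^ Suc k' * q ^ (n - k') = q ^ Suc n"
      proof -
        have "Suc k' + (n - k') = Suc n" using kn by simp
        then show ?thesis by (metis power_add)
      qed
      have "Gq q (Suc n) k * (qpoch q k * qpoch q (Suc n - k))
          = (Gq q n k' * (qpoch q k' * qpoch q (n - k'))) * (1 - q ^ Suc k')
            + q ^ Suc k' * (Gq q n (Suc k') * (qpoch q (Suc k') * qpoch q (n - Suc k'))) * (1 - q ^ (n - k'))"
        using Suc by (simp add: qpoch_Suc nk algebra_simps)
      also have "\<dots> = qpoch q n * (1 - q ^ Suc k') + q ^ Suc k' * qpoch q n * (1 - q ^ (n - k'))"
        by (simp only: t1 t2)
      also have "\<dots> = qpoch q n * (1 - q ^ Suc k' * q ^ (n - k'))" by (simp add: algebra_simps)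
      also have "\<dots> = qpoch q (Suc n)" by (simp only: pw qpoch_Suc)
      finally show ?thesis .
    qed
  qed
qed

lemma qpoch_X_nz: "qpoch (fps_X :: 'a::field fps) n \<noteq> 0"
proof -
  have "(1 - fps_X ^ i :: 'a fps) \<noteq> 0" if "i \<in> {1..n}" for i
  proof
    assume "(1 - fps_X ^ i :: 'a fps) = 0"
    then have "fps_nth (1 - fps_X ^ i :: 'a fps) 0 = 0" by simp
    then show False using that by simp
  qed
  then show ?thesis unfolding qpoch_def by (simp add: prod_zero_iff)
qed

lemma qbinom_Gq: "k \<le> n \<Longrightarrow> qbinom (fps_X :: 'a::field fps) n k = Gq fps_X n k"
  unfolding qbinom_def
  by (metis Gq_qpoch nonzero_mult_div_cancel_right mult_eq_0_iff qpoch_X_nz)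

lemma qbinom_sym: "k \<le> n \<Longrightarrow> qbinom q n (n - k) = qbinom q n k"
  unfolding qbinom_def by (simp add: mult.commute)



definition cr :: "nat set \<Rightarrow> nat set \<Rightarrow> nat" where
  "cr S R = card {(i,j). i \<in> S \<and> j \<in> R \<and> j < i}"

definition Fq :: "'a::comm_semiring_1 \<Rightarrow> nat set \<Rightarrow> nat \<Rightarrow> 'a" where
  "Fq q U k = (\<Sum>S \<in> {S. S \<subseteq> U \<and> card S = k}. q ^ cr S (U - S))"

lemma cr_insert_small_left:
  assumes "\<forall>j\<in>R. m < j"
  shows "cr (insert m S) R = cr S R"
proof -
  have "{(i,j). i \<in> insert m S \<and> j \<in> R \<and> j < i} = {(i,j). i \<in> S \<and> j \<in> R \<and> j < i}"
    using assms by auto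
  then show ?thesis unfolding cr_def by simp
qed

lemma cr_insert_small_right:
  assumes "\<forall>i\<in>S. m < i" "m \<notin> R" "finite S" "finite R"
  shows "cr S (insert m R) = cr S R + card S"
proof -
  have eq: "{(i,j). i \<in> S \<and> j \<in> insert m R \<and> j < i} =
      {(i,j). i \<in> S \<and> j \<in> R \<and> j < i} \<union> (\<lambda>i. (i, m)) ` S"
    using assms by auto
  have f1: "finite {(i,j). i \<in> S \<and> j \<in> R \<and> j < i}"
    by (rule finite_subset[of _ "S \<times> R"]) (use assms in auto)
  have "card ({(i,j). i \<in> S \<and> j \<in> R \<and> j < i} \<union> (\<lambda>i. (i, m)) ` S)
      = card {(i,j). i \<in> S \<and> j \<in> R \<and> j < i} + card ((\<lambda>i. (i, m)) ` S)"
    by (rule card_Un_disjoint) (use assms f1 in auto)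
  moreover have "card ((\<lambda>i. (i, m)) ` S) = card S"
    by (rule card_image) (auto simp: inj_on_def)
  ultimately show ?thesis unfolding cr_def eq by simp
qed

lemma Fq_Gq: "finite U \<Longrightarrow> Fq q U k = Gq q (card U) k"
proof (induction "card U" arbitrary: U k)
  case 0
  then have U: "U = {}" by simp
  show ?case
  proof (cases k)
    case 0
    have "{S. S \<subseteq> U \<and> card S = k} = {{}}" using U 0 by auto
    then show ?thesis using U 0 by (simp add: Fq_def cr_def)
  next
    case (Suc k')
    have e: "{S. S \<subseteq> U \<and> card S = k} = {}" using U Suc by auto
    have "Fq q U k = 0" unfolding Fq_def by (simp only: e sum.empty)
    then show ?thesis using U Suc by simp
  qed
next
  case (Suc N)
  then have Une: "U \<noteq> {}" by auto
  define m where "m = Min U"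
  define U' where "U' = U - {m}"
  have mU: "m \<in> U" using Une Suc.prems m_def by simp
  have fU': "finite U'" using Suc.prems U'_def by simp
  have cU': "N = card U'" using Suc.hyps mU Suc.prems U'_def by simp
  have U_eq: "U = insert m U'" using mU U'_def by auto
  have mU': "m \<notin> U'" using U'_def by simp
  have mlt: "\<forall>j\<in>U'. m < j"
    using Suc.prems U'_def m_def by (metis DiffE Min_le order_le_neq_trans singletonI)
  have IH: "\<And>k. Fq q U' k = Gq q N k" using Suc.hyps(1)[OF cU' fU'] cU' by simp
  show ?case
  proof (cases k)
    case 0
    have "{S. S \<subseteq> U \<and> card S = k} = {{}}" using 0 Suc.prems
      by (auto dest: rev_finite_subset)
    then show ?thesis using 0 by (simp add: Fq_def cr_def)
  next
    case (Suc k')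
    define A where "A = {S. S \<subseteq> U' \<and> card S = k'}"
    define B where "B = {S. S \<subseteq> U' \<and> card S = Suc k'}"
    have split: "{S. S \<subseteq> U \<and> card S = k} = insert m ` A \<union> B"
    proof (intro equalityI subsetI)
      fix S assume S: "S \<in> {S. S \<subseteq> U \<and> card S = k}"
      show "S \<in> insert m ` A \<union> B"
      proof (cases "m \<in> S")
        case True
        then have "S = insert m (S - {m})" by auto
        moreover have "S - {m} \<in> A" using S True U_eq fU' Suc
          unfolding A_def by (auto simp: finite_subset card_Diff_singleton)
        ultimately show ?thesis by blast
      next
        case False
        then have "S \<in> B" using S U_eq Suc unfolding B_def by auto
        then show ?thesis by blast
      qed
    next
      fix S assume "S \<in> insert m ` A \<union> B"
      then show "S \<in> {S. S \<subseteq> U \<and> card S = k}"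
        using U_eq Suc mU' fU' unfolding A_def B_def
        by (auto simp: card_insert_if finite_subset subset_iff)
    qed
    have fA: "finite A" unfolding A_def using fU' by simp
    have fB: "finite B" unfolding B_def using fU' by simp
    have disj: "insert m ` A \<inter> B = {}" unfolding A_def B_def using mU' by auto
    have inj: "inj_on (insert m) A" unfolding A_def inj_on_def using mU' by (metis (no_types, lifting) insert_ident mem_Collect_eq subsetD)
    have sumA: "(\<Sum>S \<in> insert m ` A. q ^ cr S (U - S)) = Fq q U' k'"
    proof -
      have "(\<Sum>S \<in> insert m ` A. q ^ cr S (U - S)) = (\<Sum>S \<in> A. q ^ cr (insert m S) (U - insert m S))"
        by (rule sum.reindex[OF inj, unfolded comp_def])
      also have "\<dots> = (\<Sum>S \<in> A. q ^ cr S (U' - S))"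
      proof (rule sum.cong[OF refl])
        fix S assume "S \<in> A"
        have "U - insert m S = U' - S" using U_eq mU' by auto
        moreover have "\<forall>j\<in>U' - S. m < j" using mlt by auto
        ultimately show "q ^ cr (insert m S) (U - insert m S) = q ^ cr S (U' - S)"
          by (simp add: cr_insert_small_left)
      qed
      finally show ?thesis unfolding Fq_def A_def by simp
    qed
    have sumB: "(\<Sum>S \<in> B. q ^ cr S (U - S)) = q ^ Suc k' * Fq q U' (Suc k')"
    proof -
      have "(\<Sum>S \<in> B. q ^ cr S (U - S)) = (\<Sum>S \<in> B. q ^ Suc k' * q ^ cr S (U' - S))"
      proof (rule sum.cong[OF refl])
        fix S assume S: "S \<in> B"
        then have "U - S = insert m (U' - S)" using U_eq mU' unfolding B_def by auto
        moreover have "cr S (insert m (U' - S)) = cr S (U' - S) + card S"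
          by (rule cr_insert_small_right) (use S mlt fU' mU' in \<open>auto simp: B_def finite_subset\<close>)
        moreover have "card S = Suc k'" using S B_def by simp
        ultimately show "q ^ cr S (U - S) = q ^ Suc k' * q ^ cr S (U' - S)"
          by (simp add: power_add mult_ac)
      qed
      then show ?thesis unfolding Fq_def B_def by (simp add: sum_distrib_left)
    qed
    have "Fq q U k = (\<Sum>S \<in> insert m ` A. q ^ cr S (U - S)) + (\<Sum>S \<in> B. q ^ cr S (U - S))"
      unfolding Fq_def split
      by (rule sum.union_disjoint) (use fA fB disj in auto)
    also have "\<dots> = Gq q N k' + q ^ Suc k' * Gq q N (Suc k')" using sumA sumB IH by simp
    finally show ?thesis using Suc Suc.hyps(2) by (simp flip: Suc.hyps(2))
  qed
qed



definition good :: "nat set \<Rightarrow> nat tree \<Rightarrow> bool" where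
  "good A T \<longleftrightarrow> set_tree T = A \<and> distinct (inorder T) \<and> increasing T \<and> andre_cond T"

definition trs :: "nat set \<Rightarrow> nat tree set" where
  "trs A = {T. good A T}"

definition Wt :: "'a \<Rightarrow> 'a \<Rightarrow> 'a \<Rightarrow> nat tree \<Rightarrow> 'a::comm_semiring_1" where
  "Wt q x y T = x ^ nleaves T * y ^ nunary T * q ^ inv T"

definition Ew :: "'a \<Rightarrow> 'a \<Rightarrow> 'a \<Rightarrow> nat set \<Rightarrow> 'a::comm_semiring_1" where
  "Ew q x y A = sum (Wt q x y) (trs A)"

lemma map_tree_Leaf_iff: "(map_tree f t = Leaf) = (t = Leaf)"
  by (cases t) auto

lemma nleaves_map: "nleaves (map_tree f T) = nleaves T"
  by (induction T) (auto simp: map_tree_Leaf_iff)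

lemma nunary_map: "nunary (map_tree f T) = nunary T"
  by (induction T) (auto simp: map_tree_Leaf_iff)

lemma smo_sub: "strict_mono_on S f \<Longrightarrow> A \<subseteq> S \<Longrightarrow> strict_mono_on A f"
  unfolding strict_mono_on_def by blast

lemma set_tree_ne: "T \<noteq> Leaf \<Longrightarrow> set_tree T \<noteq> {}"
  by (cases T) auto

lemma increasing_map:
  "strict_mono_on S f \<Longrightarrow> set_tree T \<subseteq> S \<Longrightarrow> increasing (map_tree f T) = increasing T"
proof (induction T)
  case Leaf then show ?case by simp
next
  case (Node l v r)
  have "\<And>x. x \<in> set_tree l \<union> set_tree r \<Longrightarrow> (f v < f x) = (v < x)"
    using Node.prems by (intro strict_mono_on_less) auto
  then have "(\<forall>x\<in>set_tree l \<union> set_tree r. v < x) = (\<forall>x\<in>set_tree l \<union> set_tree r. f v < f x)"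
    by blast
  then show ?case using Node by (auto simp: tree.set_map)
qed

lemma Max_image_smo:
  assumes "strict_mono_on S f" "X \<subseteq> S" "finite X" "X \<noteq> {}"
  shows "Max (f ` X) = f (Max X)"
proof (rule Max_eqI)
  show "finite (f ` X)" using assms by simp
  show "f (Max X) \<in> f ` X" using assms by simp
  fix y assume "y \<in> f ` X"
  then obtain z where z: "z \<in> X" "y = f z" by auto
  have "z \<le> Max X" using z assms by simp
  then show "y \<le> f (Max X)" using z assms strict_mono_on_leD[OF assms(1)] Max_in[of X] by blast
qed

lemma maxlab_map:
  assumes "strict_mono_on S f" "set_tree T \<subseteq> S" "T \<noteq> Leaf"
  shows "maxlab (map_tree f T) = f (maxlab T)"
  using assms Max_image_smo[OF assms(1) assms(2)]
  by (simp add: maxlab_def map_tree_Leaf_iff tree.set_map set_tree_ne)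

lemma maxlab_in: "T \<noteq> Leaf \<Longrightarrow> maxlab T \<in> set_tree T"
  by (simp add: maxlab_def)

lemma andre_map:
  "strict_mono_on S f \<Longrightarrow> set_tree T \<subseteq> S \<Longrightarrow> 0 \<notin> S \<Longrightarrow> 0 \<notin> f ` S
   \<Longrightarrow> andre_cond (map_tree f T) = andre_cond T"
proof (induction T)
  case Leaf then show ?case by simp
next
  case (Node l v r)
  have key: "((l \<noteq> Leaf \<or> r \<noteq> Leaf) \<longrightarrow> maxlab l < maxlab r) =
        ((map_tree f l \<noteq> Leaf \<or> map_tree f r \<noteq> Leaf) \<longrightarrow> maxlab (map_tree f l) < maxlab (map_tree f r))"
  proof (cases "l = Leaf")
    case True
    show ?thesis
    proof (cases "r = Leaf")
      case True2: True
      then show ?thesis using True by simp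
    next
      case False
      have "maxlab r \<in> S" using maxlab_in[OF False] Node.prems by auto
      then have "0 < maxlab r" "0 < f (maxlab r)" using Node.prems by (auto intro: gr0I)
      then show ?thesis using True False maxlab_map[OF Node.prems(1), of r] Node.prems
        by (simp add: map_tree_Leaf_iff maxlab_def)
    qed
  next
    case False
    show ?thesis
    proof (cases "r = Leaf")
      case True
      then show ?thesis using False by (simp add: map_tree_Leaf_iff maxlab_def)
    next
      case False2: False
      have "maxlab r \<in> S" "maxlab l \<in> S" using maxlab_in False False2 Node.prems by auto
      then show ?thesis using False False2 maxlab_map[OF Node.prems(1), of r]
          maxlab_map[OF Node.prems(1), of l] Node.prems
        by (simp add: map_tree_Leaf_iff strict_mono_on_less)
    qed
  qed
  show ?case using Node key by simp
qed

lemma inv_pairs_sub: "inv_pairs T \<subseteq> set_tree T \<times> set_tree T"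
  by (induction T) auto

lemma inv_pairs_map:
  "strict_mono_on S f \<Longrightarrow> set_tree T \<subseteq> S \<Longrightarrow> inv_pairs (map_tree f T) = map_prod f f ` inv_pairs T"
proof (induction T)
  case Leaf then show ?case by simp
next
  case (Node l v r)
  have e: "{(i, j). i \<in> f ` set_tree l \<and> (j \<in> f ` set_tree r \<or> j = f v) \<and> j < i}
      = map_prod f f ` {(i, j). i \<in> set_tree l \<and> (j \<in> set_tree r \<or> j = v) \<and> j < i}"
  proof (intro equalityI subsetI)
    fix p assume "p \<in> {(i, j). i \<in> f ` set_tree l \<and> (j \<in> f ` set_tree r \<or> j = f v) \<and> j < i}"
    then obtain a b where p: "p = (f a, f b)" "a \<in> set_tree l" "b \<in> set_tree r \<or> b = v" "f b < f a"
      by auto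
    have "a \<in> S" "b \<in> S" using p Node.prems by auto
    then have "b < a" using p(4) strict_mono_on_less[OF Node.prems(1)] by metis
    then show "p \<in> map_prod f f ` {(i, j). i \<in> set_tree l \<and> (j \<in> set_tree r \<or> j = v) \<and> j < i}"
      using p by force
  next
    fix p assume "p \<in> map_prod f f ` {(i, j). i \<in> set_tree l \<and> (j \<in> set_tree r \<or> j = v) \<and> j < i}"
    then obtain a b where p: "p = (f a, f b)" "a \<in> set_tree l" "b \<in> set_tree r \<or> b = v" "b < a"
      by auto
    have "a \<in> S" "b \<in> S" using p Node.prems by auto
    then have "f b < f a" using p(4) strict_mono_on_less[OF Node.prems(1)] by metis
    then show "p \<in> {(i, j). i \<in> f ` set_tree l \<and> (j \<in> f ` set_tree r \<or> j = f v) \<and> j < i}"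
      using p by auto
  qed
  show ?case using Node e by (simp add: tree.set_map image_Un)
qed

lemma inv_map:
  assumes "strict_mono_on S f" "set_tree T \<subseteq> S"
  shows "Defs.inv (map_tree f (T :: nat tree)) = Defs.inv T"
proof -
  have "inj_on (map_prod f f) (inv_pairs T)"
  proof (rule inj_on_subset[OF _ inv_pairs_sub])
    have fi: "inj_on f (set_tree T)" using inj_on_subset[OF strict_mono_on_imp_inj_on[OF assms(1)] assms(2)] by simp
    then show "inj_on (map_prod f f) (set_tree T \<times> set_tree T)" by (intro map_prod_inj_on fi)
  qed
  then show ?thesis unfolding inv_def using inv_pairs_map[OF assms] by (simp add: card_image)
qed

lemma Wt_map: "strict_mono_on S f \<Longrightarrow> set_tree T \<subseteq> S \<Longrightarrow> Wt q x y (map_tree f T) = Wt q x y T"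
  unfolding Wt_def by (simp add: nleaves_map nunary_map inv_map)

lemma good_map:
  assumes "strict_mono_on A f" "f ` A = B" "0 \<notin> A" "0 \<notin> B" "good A T"
  shows "good B (map_tree f T)"
proof -
  have s: "set_tree T = A" using assms good_def by blast
  have "inj_on f A" using assms strict_mono_on_imp_inj_on by blast
  then show ?thesis using assms s
    by (auto simp: good_def tree.set_map inorder_map distinct_map increasing_map andre_map)
qed

lemma Ew_relabel:
  assumes "strict_mono_on A f" "f ` A = B" "0 \<notin> A" "0 \<notin> B"
  shows "Ew q x y B = Ew q x y A"
proof -
  define g where "g = inv_into A f"
  have inj: "inj_on f A" using assms strict_mono_on_imp_inj_on by blast
  have gB: "g ` B = A" using inv_into_image_cancel[OF inj, of A] assms g_def by simp
  have gsm: "strict_mono_on B g"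
  proof (rule strict_mono_onI)
    fix b b' assume bb: "b \<in> B" "b' \<in> B" "b < b'"
    have gi: "g b \<in> A" "g b' \<in> A" using bb gB by auto
    have fg: "f (g b) = b" "f (g b') = b'" using bb assms g_def by (auto simp: f_inv_into_f)
    show "g b < g b'"
    proof (rule ccontr)
      assume "\<not> g b < g b'"
      then have "g b' \<le> g b" by simp
      then have "f (g b') \<le> f (g b)" using strict_mono_on_leD[OF assms(1) gi(2) gi(1)] by simp
      then show False using fg bb by simp
    qed
  qed
  have bij: "bij_betw (map_tree f) (trs A) (trs B)"
  proof (rule bij_betw_byWitness[where f'="map_tree g"])
    show "\<forall>T\<in>trs A. map_tree g (map_tree f T) = T"
    proof
      fix T assume "T \<in> trs A"
      then have "set_tree T = A" by (simp add: trs_def good_def)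
      then show "map_tree g (map_tree f T) = T"
        by (simp add: tree.map_comp g_def) (intro tree.map_ident_strong, simp add: inv_into_f_f[OF inj])
    qed
    show "\<forall>T\<in>trs B. map_tree f (map_tree g T) = T"
    proof
      fix T assume "T \<in> trs B"
      then have "set_tree T = B" by (simp add: trs_def good_def)
      then show "map_tree f (map_tree g T) = T"
        using assms(2) by (simp add: tree.map_comp g_def) (intro tree.map_ident_strong, simp add: f_inv_into_f)
    qed
    show "map_tree f ` trs A \<subseteq> trs B" using good_map[OF assms] by (auto simp: trs_def)
    show "map_tree g ` trs B \<subseteq> trs A" using good_map[OF gsm gB assms(4) assms(3)] by (auto simp: trs_def)
  qed
  have "Ew q x y B = (\<Sum>T\<in>trs A. Wt q x y (map_tree f T))"
    unfolding Ew_def by (rule sum.reindex_bij_betw[OF bij, symmetric])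
  also have "\<dots> = Ew q x y A" unfolding Ew_def
    by (rule sum.cong[OF refl]) (use Wt_map[OF assms(1)] in \<open>auto simp: trs_def good_def\<close>)
  finally show ?thesis .
qed

definition rk :: "nat set \<Rightarrow> nat \<Rightarrow> nat" where
  "rk A a = card {b \<in> A. b \<le> a}"

lemma rk_props:
  assumes "finite A"
  shows "strict_mono_on A (rk A)" "rk A ` A = {1..card A}"
proof -
  show sm: "strict_mono_on A (rk A)"
  proof (rule strict_mono_onI)
    fix a a' assume aa: "a \<in> A" "a' \<in> A" "a < a'"
    have "a' \<in> {b \<in> A. b \<le> a'}" "a' \<notin> {b \<in> A. b \<le> a}" using aa by auto
    moreover have "{b \<in> A. b \<le> a} \<subseteq> {b \<in> A. b \<le> a'}" using aa by auto
    ultimately have "{b \<in> A. b \<le> a} \<subset> {b \<in> A. b \<le> a'}" by blast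
    then show "rk A a < rk A a'" unfolding rk_def
      using psubset_card_mono assms by (metis (no_types, lifting) finite_subset mem_Collect_eq subsetI)
  qed
  have sub: "rk A ` A \<subseteq> {1..card A}"
  proof
    fix c assume "c \<in> rk A ` A"
    then obtain a where a: "a \<in> A" "c = rk A a" by auto
    have "a \<in> {b \<in> A. b \<le> a}" using a by simp
    then have "1 \<le> c" unfolding a rk_def using assms
      by (metis (no_types, lifting) One_nat_def Suc_leI card_gt_0_iff empty_iff finite_subset mem_Collect_eq subsetI)
    moreover have "c \<le> card A" unfolding a rk_def using assms by (intro card_mono) auto
    ultimately show "c \<in> {1..card A}" by simp
  qed
  have "card (rk A ` A) = card A" using card_image[OF strict_mono_on_imp_inj_on[OF sm]] .
  then show "rk A ` A = {1..card A}" using sub by (intro card_subset_eq) auto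
qed

lemma Ew_card: "finite A \<Longrightarrow> 0 \<notin> A \<Longrightarrow> Ew q x y A = Ew q x y {1..card A}"
  using Ew_relabel[OF rk_props] by (metis atLeastAtMost_iff not_one_le_zero)

lemma EI_Ew: "m \<ge> 1 \<Longrightarrow> EI m q x y = Ew q x y {1..m}"
  unfolding EI_def Ew_def Wt_def trs_def good_def andreI_trees_def inc_trees_def by auto



lemma fin_trees: "finite A \<Longrightarrow> finite {T. set_tree T \<subseteq> A \<and> size T \<le> n}"
proof (induction n)
  case 0
  have "{T. set_tree T \<subseteq> A \<and> size T \<le> 0} \<subseteq> {Leaf}" by auto
  then show ?case using finite_subset by blast
next
  case (Suc n)
  let ?X = "{T. set_tree T \<subseteq> A \<and> size T \<le> n}"
  have "{T. set_tree T \<subseteq> A \<and> size T \<le> Suc n} \<subseteq>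
        insert Leaf ((\<lambda>(l, v, r). Node l v r) ` (?X \<times> A \<times> ?X))"
  proof
    fix T assume T: "T \<in> {T. set_tree T \<subseteq> A \<and> size T \<le> Suc n}"
    show "T \<in> insert Leaf ((\<lambda>(l, v, r). Node l v r) ` (?X \<times> A \<times> ?X))"
    proof (cases T)
      case Leaf then show ?thesis by simp
    next
      case (Node l v r)
      then have "(l, v, r) \<in> ?X \<times> A \<times> ?X" using T by auto
      then show ?thesis using Node by force
    qed
  qed
  moreover have "finite (insert Leaf ((\<lambda>(l, v, r). Node l v r) ` (?X \<times> A \<times> ?X)))"
    using Suc by simp
  ultimately show ?case using finite_subset by blast
qed

lemma finite_trs: "finite A \<Longrightarrow> finite (trs A)"
proof -
  assume fA: "finite A"
  have "trs A \<subseteq> {T. set_tree T \<subseteq> A \<and> size T \<le> card A}"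
  proof
    fix T assume "T \<in> trs A"
    then have g: "set_tree T = A" "distinct (inorder T)" by (auto simp: trs_def good_def)
    have "size T = length (inorder T)" by (simp add: length_inorder)
    also have "\<dots> = card A" using distinct_card[OF g(2)] g(1) by simp
    finally show "T \<in> {T. set_tree T \<subseteq> A \<and> size T \<le> card A}" using g by simp
  qed
  then show ?thesis using fin_trees[OF fA] finite_subset by blast
qed

lemma trs_empty: "trs {} = {Leaf}"
  by (auto simp: trs_def good_def)

lemma good_Leaf_iff: "good A Leaf \<longleftrightarrow> A = {}"
  by (auto simp: good_def)

lemma maxlab_le: "T \<noteq> Leaf \<Longrightarrow> \<forall>a\<in>set_tree T. a \<le> M \<Longrightarrow> maxlab T \<le> M"
  using maxlab_in by blast

lemma maxlab_ge: "a \<in> set_tree T \<Longrightarrow> a \<le> maxlab T"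
  by (auto simp: maxlab_def)

context
  fixes n :: nat
  assumes n1: "n \<ge> 1"
begin

definition "CC = {2..Suc n}"
definition "UU = {2..n}"
definition "SG = (SIGMA S:Pow UU. trs S \<times> trs (CC - S))"
definition "PHI = (\<lambda>(S::nat set, L, R). Node L (1::nat) R)"

lemma UU_CC: "UU \<subseteq> CC" "Suc n \<in> CC" "Suc n \<notin> UU" "CC = insert (Suc n) UU"
  using n1 by (auto simp: UU_def CC_def)

lemma SG_mem: "(S, L, R) \<in> SG \<longleftrightarrow> S \<subseteq> UU \<and> good S L \<and> good (CC - S) R"
  by (auto simp: SG_def trs_def)

lemma SG_R: "(S, L, R) \<in> SG \<Longrightarrow> Suc n \<in> set_tree R \<and> R \<noteq> Leaf"
  using UU_CC by (auto simp: SG_mem good_def)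

lemma SG_good: "(S, L, R) \<in> SG \<Longrightarrow> good {1..Suc n} (Node L 1 R)"
proof -
  assume m: "(S, L, R) \<in> SG"
  then have S: "S \<subseteq> UU" and gL: "good S L" and gR: "good (CC - S) R" by (auto simp: SG_mem)
  have sL: "set_tree L = S" and sR: "set_tree R = CC - S" using gL gR by (auto simp: good_def)
  have ic: "insert 1 CC = {1..Suc n}" by (auto simp: CC_def)
  have set: "set_tree (Node L 1 R) = {1..Suc n}"
    unfolding ic[symmetric] using sL sR S UU_CC(1) by auto
  have dist: "distinct (inorder (Node L 1 R))"
    using gL gR sL sR S UU_CC by (auto simp: good_def UU_def CC_def)
  have inc: "increasing (Node L 1 R)"
    using gL gR sL sR S by (auto simp: good_def UU_def CC_def)
  have mR: "maxlab R = Suc n"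
  proof (rule antisym)
    show "maxlab R \<le> Suc n" using SG_R[OF m] sR by (intro maxlab_le) (auto simp: CC_def)
    show "Suc n \<le> maxlab R" using SG_R[OF m] by (intro maxlab_ge) auto
  qed
  have mL: "maxlab L < Suc n"
  proof (cases "L = Leaf")
    case True then show ?thesis by (simp add: maxlab_def)
  next
    case False
    have "maxlab L \<le> n" using False sL S by (intro maxlab_le) (auto simp: UU_def)
    then show ?thesis by simp
  qed
  have andre: "andre_cond (Node L 1 R)" using gL gR mL mR by (simp add: good_def)
  show ?thesis using set dist inc andre by (simp add: good_def)
qed

lemma SG_image: "trs {1..Suc n} = PHI ` SG"
proof (intro equalityI subsetI)
  fix T assume "T \<in> PHI ` SG"
  then obtain S L R where "(S, L, R) \<in> SG" "T = Node L 1 R" by (auto simp: PHI_def)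
  then show "T \<in> trs {1..Suc n}" using SG_good by (simp add: trs_def)
next
  fix T assume "T \<in> trs {1..Suc n}"
  then have g: "good {1..Suc n} T" by (simp add: trs_def)
  then have "T \<noteq> Leaf" by (auto simp: good_def)
  then obtain L v R where T: "T = Node L v R" by (cases T) auto
  have st: "set_tree L \<union> {v} \<union> set_tree R = {1..Suc n}" using g T by (auto simp: good_def)
  have inc: "\<forall>x\<in>set_tree L \<union> set_tree R. v < x" "increasing L" "increasing R"
    using g T by (auto simp: good_def)
  have dist: "distinct (inorder L)" "distinct (inorder R)" "v \<notin> set_tree L" "v \<notin> set_tree R"
    "set_tree L \<inter> set_tree R = {}" using g T by (auto simp: good_def)
  have an: "(L \<noteq> Leaf \<or> R \<noteq> Leaf) \<longrightarrow> maxlab L < maxlab R" "andre_cond L" "andre_cond R"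
    using g T by (auto simp: good_def)
  have v1: "v = 1"
  proof (rule ccontr)
    assume "v \<noteq> 1"
    then have "1 \<in> set_tree L \<union> set_tree R" using st by auto
    then have "v < 1" using inc by blast
    then have "v = 0" by simp
    moreover have "v \<in> {1..Suc n}" using st by auto
    ultimately show False by simp
  qed
  define S where "S = set_tree L"
  have LR: "set_tree L \<union> set_tree R = CC"
  proof -
    have "{1..Suc n} - {1} = CC" by (auto simp: CC_def)
    then show ?thesis using st dist v1 by blast
  qed
  have sR: "set_tree R = CC - S" using LR dist(5) by (auto simp: S_def)
  have nS: "Suc n \<notin> S"
  proof
    assume a: "Suc n \<in> S"
    then have L: "L \<noteq> Leaf" by (auto simp: S_def)
    have "Suc n \<le> maxlab L" using a maxlab_ge S_def by blast
    moreover have "maxlab R \<le> Suc n"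
    proof (cases "R = Leaf")
      case True then show ?thesis by (simp add: maxlab_def)
    next
      case False then show ?thesis using st by (intro maxlab_le) auto
    qed
    ultimately show False using an L by simp
  qed
  have SC: "S \<subseteq> CC" using LR unfolding S_def by (metis Un_upper1)
  have SU: "S \<subseteq> UU" using SC nS UU_CC(4) by auto
  have "(S, L, R) \<in> SG" using SU sR inc an dist by (auto simp: SG_mem good_def S_def)
  then show "T \<in> PHI ` SG" using T v1 by (auto simp: PHI_def image_iff intro!: bexI[of _ "(S, L, R)"])
qed

lemma SG_inj: "inj_on PHI SG"
proof (rule inj_onI)
  fix a b assume a: "a \<in> SG" and b: "b \<in> SG" and e: "PHI a = PHI b"
  obtain S L R where A: "a = (S, L, R)" by (cases a) auto
  obtain S' L' R' where B: "b = (S', L', R')" by (cases b) auto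
  have "L = L'" "R = R'" using e A B by (auto simp: PHI_def)
  moreover have "S = set_tree L" "S' = set_tree L'" using a b A B by (auto simp: SG_mem good_def)
  ultimately show "a = b" using A B by simp
qed

lemma SG_weight:
  assumes m: "(S, L, R) \<in> SG"
  shows "Wt q x y (Node L 1 R) =
    (if S = {} then y * Wt q x y R else q ^ (card S + cr S (UU - S)) * Wt q x y L * Wt q x y R)"
proof -
  have S: "S \<subseteq> UU" and gL: "good S L" and gR: "good (CC - S) R" using m by (auto simp: SG_mem)
  have sL: "set_tree L = S" and sR: "set_tree R = CC - S" using gL gR by (auto simp: good_def)
  have Rn: "R \<noteq> Leaf" using SG_R[OF m] by simp
  show ?thesis
  proof (cases "S = {}")
    case True
    then have L: "L = Leaf" using sL by (cases L) auto
    have "inv_pairs (Node L 1 R) = inv_pairs R" using L by simp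
    then show ?thesis using True L Rn by (simp add: Wt_def Defs.inv_def mult_ac)
  next
    case False
    then have Ln: "L \<noteq> Leaf" using sL by auto
    define N where "N = {(i, j). i \<in> set_tree L \<and> (j \<in> set_tree R \<or> j = 1) \<and> j < i}"
    have N_eq: "N = {(i, j). i \<in> S \<and> j \<in> insert 1 (UU - S) \<and> j < i}"
      using S UU_CC unfolding N_def sL sR by (auto simp: UU_def CC_def)
    have cN: "card N = cr S (UU - S) + card S"
      unfolding N_eq cr_def[symmetric]
      by (rule cr_insert_small_right) (use S finite_subset in \<open>auto simp: UU_def\<close>)
    have ip: "inv_pairs (Node L 1 R) = inv_pairs L \<union> inv_pairs R \<union> N" by (simp add: N_def)
    have fL: "finite (inv_pairs L)" by (rule finite_subset[OF inv_pairs_sub]) simp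
    have fR: "finite (inv_pairs R)" by (rule finite_subset[OF inv_pairs_sub]) simp
    have fN: "finite N" unfolding N_def
      by (rule finite_subset[of _ "set_tree L \<times> insert 1 (set_tree R)"]) auto
    have d1: "inv_pairs L \<inter> inv_pairs R = {}"
      using inv_pairs_sub[of L] inv_pairs_sub[of R] sL sR by auto
    have d2: "(inv_pairs L \<union> inv_pairs R) \<inter> N = {}"
      using inv_pairs_sub[of L] inv_pairs_sub[of R] sL sR S UU_CC unfolding N_eq
      by (auto simp: UU_def)
    have "Defs.inv (Node L 1 R) = Defs.inv L + Defs.inv R + card N"
      unfolding Defs.inv_def ip
      using card_Un_disjoint[OF _ fN d2] card_Un_disjoint[OF fL fR d1] fL fR by simp
    then show ?thesis using False Ln Rn cN
      by (simp add: Wt_def power_add mult_ac)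
  qed
qed

lemma Ew_EI: "finite A \<Longrightarrow> A \<noteq> {} \<Longrightarrow> 0 \<notin> A \<Longrightarrow> Ew q x y A = EI (card A) q x y"
  using Ew_card EI_Ew by (metis One_nat_def Suc_leI card_gt_0_iff)

lemma decomp:
  "Ew q x y {1..Suc n} = y * EI n q x y
     + (\<Sum>j\<in>{1..n-1}. q ^ j * EI j q x y * EI (n - j) q x y * Gq q (n - 1) j)"
proof -
  have finSG1: "finite (Pow UU)" by (simp add: UU_def)
  have finSG2: "\<forall>S\<in>Pow UU. finite (trs S \<times> trs (CC - S))"
  proof
    fix S assume "S \<in> Pow UU"
    then have "finite S" by (auto simp: UU_def intro: finite_subset)
    then show "finite (trs S \<times> trs (CC - S))" by (simp add: finite_trs CC_def)
  qed
  note finSG = finSG1 finSG2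
  define h where "h S = (\<Sum>L\<in>trs S. \<Sum>R\<in>trs (CC - S). Wt q x y (Node L 1 R))" for S
  have "Ew q x y {1..Suc n} = sum (Wt q x y \<circ> PHI) SG"
    unfolding Ew_def SG_image by (rule sum.reindex[OF SG_inj])
  also have "\<dots> = (\<Sum>S\<in>Pow UU. \<Sum>p\<in>trs S \<times> trs (CC - S). Wt q x y (PHI (S, p)))"
    unfolding SG_def by (subst sum.Sigma[OF finSG]) (intro sum.cong refl, auto)
  also have "\<dots> = (\<Sum>S\<in>Pow UU. h S)"
    unfolding h_def by (intro sum.cong refl) (simp add: sum.cartesian_product' PHI_def)
  also have "\<dots> = h {} + (\<Sum>S\<in>Pow UU - {{}}. h S)"
    by (rule sum.remove) (auto simp: UU_def)
  also have "h {} = y * EI n q x y"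
  proof -
    have "h {} = (\<Sum>R\<in>trs CC. Wt q x y (Node Leaf 1 R))" unfolding h_def trs_empty by simp
    also have "\<dots> = (\<Sum>R\<in>trs CC. y * Wt q x y R)"
    proof (rule sum.cong[OF refl])
      fix R assume "R \<in> trs CC"
      then have "({}, Leaf, R) \<in> SG" by (auto simp: SG_mem trs_def good_def)
      from SG_weight[OF this] show "Wt q x y (Node Leaf 1 R) = y * Wt q x y R" by simp
    qed
    also have "\<dots> = y * Ew q x y CC" by (simp add: Ew_def sum_distrib_left)
    also have "\<dots> = y * EI n q x y"
    proof -
      have c: "card CC = n" "finite CC" "CC \<noteq> {}" "0 \<notin> CC" using n1 by (auto simp: CC_def)
      have "Ew q x y CC = EI n q x y" using Ew_EI[OF c(2-4), of q x y] c(1) by simp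
      then show ?thesis by simp
    qed
    finally show ?thesis .
  qed
  also have "(\<Sum>S\<in>Pow UU - {{}}. h S) =
      (\<Sum>S\<in>Pow UU - {{}}. q ^ card S * q ^ cr S (UU - S) * EI (card S) q x y * EI (n - card S) q x y)"
  proof (rule sum.cong[OF refl])
    fix S assume S: "S \<in> Pow UU - {{}}"
    have fS: "finite S" using S by (auto simp: UU_def finite_subset)
    have "h S = (\<Sum>L\<in>trs S. \<Sum>R\<in>trs (CC - S). q ^ (card S + cr S (UU - S)) * Wt q x y L * Wt q x y R)"
      unfolding h_def
    proof (intro sum.cong refl)
      fix L R assume "L \<in> trs S" "R \<in> trs (CC - S)"
      then have "(S, L, R) \<in> SG" using S by (auto simp: SG_mem trs_def)
      from SG_weight[OF this] show "Wt q x y (Node L 1 R) = q ^ (card S + cr S (UU - S)) * Wt q x y L * Wt q x y R"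
        using S by simp
    qed
    also have "\<dots> = q ^ (card S + cr S (UU - S)) * Ew q x y S * Ew q x y (CC - S)"
      by (simp add: Ew_def sum_distrib_left sum_distrib_right mult_ac)
    also have "Ew q x y S = EI (card S) q x y" using S fS by (intro Ew_EI) (auto simp: UU_def)
    also have "Ew q x y (CC - S) = EI (n - card S) q x y"
    proof -
      have cC: "card CC = n" by (simp add: CC_def)
      have SC: "S \<subseteq> CC" using S UU_CC(1) by auto
      have "card (CC - S) = n - card S" using card_Diff_subset[OF fS SC] cC by simp
      moreover have "CC - S \<noteq> {}" using S UU_CC by auto
      ultimately show ?thesis using Ew_EI[of "CC - S"] by (simp add: CC_def)
    qed
    finally show "h S = q ^ card S * q ^ cr S (UU - S) * EI (card S) q x y * EI (n - card S) q x y"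
      by (simp add: power_add)
  qed
  also have "\<dots> = (\<Sum>j\<in>{1..n-1}. \<Sum>S\<in>{S \<in> Pow UU - {{}}. card S = j}.
        q ^ card S * q ^ cr S (UU - S) * EI (card S) q x y * EI (n - card S) q x y)"
  proof (rule sum.group[symmetric])
    show "finite (Pow UU - {{}})" by (simp add: UU_def)
    show "finite {1..n-1}" by simp
    show "card ` (Pow UU - {{}}) \<subseteq> {1..n - 1}"
    proof
      fix c assume "c \<in> card ` (Pow UU - {{}})"
      then obtain S where S: "S \<subseteq> UU" "S \<noteq> {}" "c = card S" by auto
      have "finite S" using S by (auto simp: UU_def finite_subset)
      then have "1 \<le> c" using S by (simp add: Suc_leI card_gt_0_iff)
      moreover have "c \<le> card UU" unfolding S(3) by (rule card_mono) (use S in \<open>auto simp: UU_def\<close>)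
      ultimately show "c \<in> {1..n-1}" by (simp add: UU_def)
    qed
  qed
  also have "\<dots> = (\<Sum>j\<in>{1..n-1}. q ^ j * EI j q x y * EI (n - j) q x y * Gq q (n - 1) j)"
  proof (rule sum.cong[OF refl])
    fix j assume j: "j \<in> {1..n-1}"
    have e: "{S \<in> Pow UU - {{}}. card S = j} = {S. S \<subseteq> UU \<and> card S = j}" using j by auto
    have "(\<Sum>S\<in>{S \<in> Pow UU - {{}}. card S = j}.
        q ^ card S * q ^ cr S (UU - S) * EI (card S) q x y * EI (n - card S) q x y)
        = (\<Sum>S\<in>{S. S \<subseteq> UU \<and> card S = j}. (q ^ j * EI j q x y * EI (n - j) q x y) * q ^ cr S (UU - S))"
      unfolding e by (intro sum.cong refl) (auto simp: mult_ac)
    also have "\<dots> = q ^ j * EI j q x y * EI (n - j) q x y * Fq q UU j"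
      by (simp add: Fq_def sum_distrib_left)
    also have "Fq q UU j = Gq q (n - 1) j" by (simp add: Fq_Gq UU_def)
    finally show "(\<Sum>S\<in>{S \<in> Pow UU - {{}}. card S = j}.
        q ^ card S * q ^ cr S (UU - S) * EI (card S) q x y * EI (n - card S) q x y)
        = q ^ j * EI j q x y * EI (n - j) q x y * Gq q (n - 1) j" .
  qed
  finally show ?thesis .
qed

end

theorem theorem6p8:
  fixes x y :: "'a::field fps" and n :: nat
  assumes "n \<ge> 1"
  shows "EI (Suc n) fps_X x y =
           y * EI n fps_X x y
           + (\<Sum>k < n - 1. fps_X ^ (n - k - 1) * qbinom fps_X (n - 1) k
                 * EI (k + 1) fps_X x y * EI (n - k - 1) fps_X x y)"
proof -
  have "EI (Suc n) fps_X x y = Ew fps_X x y {1..Suc n}" by (simp add: EI_Ew)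
  also have "\<dots> = y * EI n fps_X x y
     + (\<Sum>j\<in>{1..n-1}. fps_X ^ j * EI j fps_X x y * EI (n - j) fps_X x y * Gq fps_X (n - 1) j)"
    by (rule decomp[OF assms])
  also have "(\<Sum>j\<in>{1..n-1}. fps_X ^ j * EI j fps_X x y * EI (n - j) fps_X x y * Gq fps_X (n - 1) j)
      = (\<Sum>k < n - 1. fps_X ^ (n - k - 1) * qbinom fps_X (n - 1) k
                 * EI (k + 1) fps_X x y * EI (n - k - 1) fps_X x y)"
  proof (rule sum.reindex_bij_witness[symmetric, where i="\<lambda>j. n - 1 - j" and j="\<lambda>k. n - 1 - k"])
    fix k assume k: "k \<in> {..<n-1}"
    show "n - 1 - (n - 1 - k) = k" using k by simp
    have "k < n - 1" using k by simp
    then show "n - 1 - k \<in> {1..n-1}" by (simp only: atLeastAtMost_iff) arith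
    have kk: "k \<le> n - 1" "n - 1 - k \<le> n - 1" using k by auto
    have qb: "qbinom fps_X (n - 1) k = Gq (fps_X :: 'a fps) (n - 1) (n - 1 - k)"
      using qbinom_sym[OF kk(1), of "fps_X :: 'a fps"] qbinom_Gq[OF kk(2)] by metis
    have e1: "n - (n - 1 - k) = k + 1" "n - k - 1 = n - 1 - k" using k by auto
    show "fps_X ^ (n - 1 - k) * EI (n - 1 - k) fps_X x y * EI (n - (n - 1 - k)) fps_X x y
        * Gq fps_X (n - 1) (n - 1 - k)
       = fps_X ^ (n - k - 1) * qbinom fps_X (n - 1) k * EI (k + 1) fps_X x y * EI (n - k - 1) fps_X x y"
      unfolding qb e1 by (simp add: mult_ac)
  next
    fix j assume j: "j \<in> {1..n-1}"
    show "n - 1 - (n - 1 - j) = j" using j by (simp only: atLeastAtMost_iff) arith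
    show "n - 1 - j \<in> {..<n-1}" using j by auto
  qed
  finally show ?thesis .
qed


end
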